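(* For every rational number $\ell > 1$ there exists an integer $N(\ell)$ such that for every integer $m > N(\ell)$ for which $\ell \cdot m$ is an integer, the complete bipartite graph $K_{m,\ell\cdot m}$ is not stable, i.e., its independence polynomial has a root $z$ with $\mathrm{Re}(z) > 0$.
   Context: For a simple graph $G$, the independence polynomial is $i(G,x)=\sum_{k=0}^{\alpha(G)} i_k(G)x^k$, where $i_k(G)$ is the number of independent sets of size $k$ in $G$ (with $i_0(G)=1$) and $\alpha(G)$ is the independence number. A graph $G$ is called stable if every root $z$ of $i(G,x)$ satisfies $\mathrm{Re}(z)\leq 0$. $K_{a,b}$ denotes the complete bipartite graph with parts of sizes $a$ and $b$; its independence polynomial is $(1+x)^a+(1+x)^b-1$. *)

theory Defs
  imports Complex_Main
begin

definition independent_set :: "'a set \<Rightarrow> ('a \<Rightarrow> 'a \<Rightarrow> bool) \<Rightarrow> 'a set \<Rightarrow> bool" where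
  "independent_set V E S \<longleftrightarrow> S \<subseteq> V \<and> (\<forall>u\<in>S. \<forall>v\<in>S. \<not> E u v)"

definition indep_count :: "'a set \<Rightarrow> ('a \<Rightarrow> 'a \<Rightarrow> bool) \<Rightarrow> nat \<Rightarrow> nat" where
  "indep_count V E k = card {S. independent_set V E S \<and> card S = k}"

text \<open>Independence polynomial i(G,x) = sum over k of i_k(G) x^k, evaluated at
a complex number (the sum up to card V covers all k up to alpha(G)).\<close>
definition indep_poly :: "'a set \<Rightarrow> ('a \<Rightarrow> 'a \<Rightarrow> bool) \<Rightarrow> complex \<Rightarrow> complex" where
  "indep_poly V E x = (\<Sum>k\<le>card V. of_nat (indep_count V E k) * x ^ k)"

definition stable_graph :: "'a set \<Rightarrow> ('a \<Rightarrow> 'a \<Rightarrow> bool) \<Rightarrow> bool" where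
  "stable_graph V E \<longleftrightarrow> (\<forall>z. indep_poly V E z = 0 \<longrightarrow> Re z \<le> 0)"

definition Kbip_V :: "nat \<Rightarrow> nat \<Rightarrow> (nat + nat) set" where
  "Kbip_V a b = Inl ` {..<a} \<union> Inr ` {..<b}"

definition Kbip_E :: "(nat + nat) \<Rightarrow> (nat + nat) \<Rightarrow> bool" where
  "Kbip_E u v \<longleftrightarrow> (isl u \<and> \<not> isl v) \<or> (\<not> isl u \<and> isl v)"

end

theory Submission
  imports Defs "HOL-Computational_Algebra.Fundamental_Theorem_Algebra"
begin


lemma binom_sum_ext:
  fixes z :: complex
  assumes "n \<le> M"
  shows "(\<Sum>k\<le>M. of_nat (n choose k) * z^k) = (1+z)^n"
proof -
  have "(\<Sum>k\<le>M. of_nat (n choose k) * z^k) = (\<Sum>k\<le>n. of_nat (n choose k) * z^k)"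
    by (rule sum.mono_neutral_right) (use assms in auto)
  also have "\<dots> = (z+1)^n" by (simp add: binomial_ring)
  finally show ?thesis by (simp add: add.commute)
qed

lemma kbip_indep:
  "independent_set (Kbip_V a b) Kbip_E S \<longleftrightarrow> S \<subseteq> Inl ` {..<a} \<or> S \<subseteq> Inr ` {..<b}"
proof
  assume h: "independent_set (Kbip_V a b) Kbip_E S"
  show "S \<subseteq> Inl ` {..<a} \<or> S \<subseteq> Inr ` {..<b}"
  proof (rule ccontr)
    assume "\<not> ?thesis"
    then obtain u v where u: "u \<in> S" "u \<notin> Inl ` {..<a}" and v: "v \<in> S" "v \<notin> Inr ` {..<b}" by blast
    with h have "u \<in> Inr ` {..<b}" "v \<in> Inl ` {..<a}" unfolding independent_set_def Kbip_V_def by auto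
    then have "Kbip_E u v" unfolding Kbip_E_def by auto
    with h u v show False unfolding independent_set_def by blast
  qed
next
  assume "S \<subseteq> Inl ` {..<a} \<or> S \<subseteq> Inr ` {..<b}"
  then show "independent_set (Kbip_V a b) Kbip_E S"
    unfolding independent_set_def Kbip_V_def Kbip_E_def by auto
qed

lemma kbip_count:
  "(of_nat (indep_count (Kbip_V a b) Kbip_E k) :: complex) =
    of_nat (a choose k) + of_nat (b choose k) - (if k = 0 then 1 else 0)"
proof -
  let ?L = "Inl ` {..<a} :: (nat+nat) set" and ?R = "Inr ` {..<b} :: (nat+nat) set"
  let ?A = "{S. S \<subseteq> ?L \<and> card S = k}" and ?B = "{S. S \<subseteq> ?R \<and> card S = k}"
  have eq: "{S. independent_set (Kbip_V a b) Kbip_E S \<and> card S = k} = ?A \<union> ?B"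
    unfolding kbip_indep by auto
  have cL: "card ?L = a" by (simp add: card_image)
  have cR: "card ?R = b" by (simp add: card_image)
  have cA: "card ?A = card ?L choose k" by (rule n_subsets) simp
  have cB: "card ?B = card ?R choose k" by (rule n_subsets) simp
  have fA: "finite ?A" by (rule finite_subset[of _ "Pow ?L"]) auto
  have fB: "finite ?B" by (rule finite_subset[of _ "Pow ?R"]) auto
  have LR: "?L \<inter> ?R = {}" by auto
  have emp: "S = {}" if "S \<in> ?A \<inter> ?B" for S
  proof -
    from that have "S \<subseteq> ?L" "S \<subseteq> ?R" by auto
    then have "S \<subseteq> ?L \<inter> ?R" by (rule Int_greatest)
    with LR show ?thesis by simp
  qed
  define d :: nat where "d = (if k = 0 then 1 else 0)"
  have cI: "card (?A \<inter> ?B) = d"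
  proof (cases "k = 0")
    case True
    have "?A \<inter> ?B = {{}}"
    proof
      show "?A \<inter> ?B \<subseteq> {{}}" using emp by blast
      show "{{}} \<subseteq> ?A \<inter> ?B" using True by simp
    qed
    then show ?thesis using True d_def by simp
  next
    case False
    have "?A \<inter> ?B = {}"
    proof (rule equals0I)
      fix S assume h: "S \<in> ?A \<inter> ?B"
      then have "S = {}" by (rule emp)
      with h False show False by simp
    qed
    then show ?thesis using False d_def by simp
  qed
  have "card (?A \<union> ?B) + card (?A \<inter> ?B) = card ?A + card ?B"
    by (rule card_Un_Int[OF fA fB, symmetric])
  then have neq: "card (?A \<union> ?B) + d = (a choose k) + (b choose k)"
    unfolding cI cA cB cL cR .
  have "(of_nat (card (?A \<union> ?B) + d) :: complex) = of_nat ((a choose k) + (b choose k))"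
    unfolding neq ..
  then have "(of_nat (card (?A \<union> ?B)) :: complex) = of_nat (a choose k) + of_nat (b choose k) - of_nat d"
    by (simp only: of_nat_add eq_diff_eq)
  moreover have "(of_nat d :: complex) = (if k = 0 then 1 else 0)" unfolding d_def by simp
  ultimately show ?thesis unfolding indep_count_def eq by simp
qed

lemma kbip_poly:
  "indep_poly (Kbip_V a b) Kbip_E z = (1+z)^a + (1+z)^b - 1"
proof -
  have cV: "card (Kbip_V a b) = a + b"
    unfolding Kbip_V_def by (subst card_Un_disjoint) (auto simp: card_image)
  have "indep_poly (Kbip_V a b) Kbip_E z =
     (\<Sum>k\<le>a+b. of_nat (a choose k) * z^k) + (\<Sum>k\<le>a+b. of_nat (b choose k) * z^k)
       - (\<Sum>k\<le>a+b. (if k = 0 then 1 else 0) * z^k)"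
    unfolding indep_poly_def cV kbip_count
    by (simp add: algebra_simps sum.distrib sum_subtractf)
  also have "(\<Sum>k\<le>a+b. (if k = 0 then 1 else 0) * z^k) = 1"
  proof -
    have "\<And>k. (if k = 0 then 1 else 0) * z^k = (if k = 0 then (1::complex) else 0)" by simp
    then have "(\<Sum>k\<le>a+b. (if k = 0 then 1 else 0) * z^k) = (\<Sum>k\<le>a+b. (if k = 0 then (1::complex) else 0))"
      by (intro sum.cong) auto
    then show ?thesis by (simp add: sum.delta)
  qed
  finally show ?thesis using binom_sum_ext[of a "a+b" z] binom_sum_ext[of b "a+b" z] by simp
qed



lemma big_root:
  fixes p q :: nat
  assumes q0: "0 < q" and qp: "q < p"
  shows "\<exists>u::complex. u^q + u^p = 1 \<and> norm u > 1"
proof -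
  define P :: "complex poly" where "P = monom 1 p + (monom 1 q - 1)"
  have polyP: "poly P u = u^p + u^q - 1" for u
    unfolding P_def by (simp add: poly_monom)
  have dq: "degree (monom (1::complex) q - 1) \<le> q"
    by (rule order.trans[OF degree_diff_le_max]) (auto simp: degree_monom_le)
  have dP: "degree P = p"
    unfolding P_def
    by (subst degree_add_eq_left) (use dq qp in \<open>auto simp: degree_monom_eq\<close>)
  have lP: "lead_coeff P = 1"
    unfolding dP unfolding P_def using qp by (simp add: coeff_monom)
  obtain root where rt: "smult (lead_coeff P) (\<Prod>i<degree P. [:-root i, 1:]) = P"
    using complex_poly_decompose' by blast
  then have rt': "P = (\<Prod>i<p. [:-root i, 1:])" using lP dP by simp
  have pe: "poly P u = (\<Prod>i<p. u - root i)" for u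
    by (subst rt') (simp add: poly_prod)
  define f :: "real \<Rightarrow> real" where "f x = x^p + x^q - 1" for x
  have "\<exists>x. 0 \<le> x \<and> x \<le> 1 \<and> f x = 0"
    by (rule IVT') (use q0 qp in \<open>auto simp: f_def power_0_left intro!: continuous_intros\<close>)
  then obtain x where x0: "0 \<le> x" "x \<le> 1" and fx: "f x = 0" by blast
  have x1: "x < 1" using fx x0 by (cases "x = 1") (auto simp: f_def power_0_left)
  have "poly P (of_real x) = of_real (f x)" unfolding polyP f_def by simp
  then have "(\<Prod>i<p. of_real x - root i) = 0" using fx pe by simp
  then obtain i where i: "i < p" "root i = of_real x" by auto
  have "poly P 0 = -1" unfolding polyP using q0 qp by (simp add: power_0_left)
  then have "(\<Prod>i<p. - root i) = -1" using pe by simp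
  then have "norm (\<Prod>i<p. - root i) = 1" by simp
  then have pn: "(\<Prod>i<p. norm (root i)) = 1" by (simp add: prod_norm[symmetric])
  have "\<exists>j<p. norm (root j) > 1"
  proof (rule ccontr)
    assume "\<not> ?thesis"
    then have le: "\<And>j. j < p \<Longrightarrow> norm (root j) \<le> 1" by (meson not_less)
    have "(\<Prod>j<p. norm (root j)) = norm (root i) * (\<Prod>j\<in>{..<p} - {i}. norm (root j))"
      using i by (subst prod.remove[of _ i]) auto
    also have "\<dots> \<le> norm (root i) * 1"
      by (intro mult_left_mono prod_le_1) (use le in auto)
    also have "\<dots> < 1" using i x0 x1 by simp
    finally show False using pn by simp
  qed
  then obtain j where j: "j < p" "norm (root j) > 1" by blast
  have "poly P (root j) = 0" unfolding pe using j by (auto intro: prod_zero)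
  then show ?thesis using j unfolding polyP by (intro exI[of _ "root j"]) (simp add: algebra_simps)
qed

lemma ineq_aux:
  fixes a k :: real
  assumes a: "a > 0" and k1: "k > 16 / a" and k2: "k > a" and k3: "k \<ge> 3"
  shows "(1 + a/k) * (1 - 8/k^2) > 1"
proof -
  have kp: "k > 0" using k3 by simp
  have ak: "a * k > 16" using k1 a by (simp add: field_simps)
  have "a * k^2 > 16 * k" using ak kp by (simp add: power2_eq_square algebra_simps) 
  then have m: "a * k^2 > 8 * k + 8 * a" using k2 by simp
  have "(1 + a/k) * (1 - 8/k^2) - 1 = (a * k^2 - 8*k - 8*a) / k^3"
    using kp by (simp add: field_simps power2_eq_square power3_eq_cube)
  also have "\<dots> > 0" using m kp by simp
  finally show ?thesis by simp
qed

lemma cos_lb: "cos (t::real) \<ge> 1 - t^2/2"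
proof -
  have "cos t = 1 - 2 * sin (t/2) ^ 2" using cos_double_sin[of "t/2"] by simp
  moreover have "sin (t/2) ^ 2 \<le> (t/2)^2"
    using abs_sin_x_le_abs_x[of "t/2"] by (metis abs_ge_zero power2_abs power_mono)
  ultimately show ?thesis by (simp add: power_divide)
qed

lemma kth_root:
  fixes u :: complex
  assumes R: "norm u > 1"
  shows "\<exists>K::nat. \<forall>k>K. \<exists>w. w^k = u \<and> Re w > 1"
proof -
  define R where "R = norm u"
  define a where "a = ln R"
  have R1: "R > 1" using R R_def by simp
  have a0: "a > 0" unfolding a_def using R1 by simp
  define K where "K = nat \<lceil>16/a + a\<rceil> + 3"
  show ?thesis
  proof (rule exI, intro allI impI)
    fix k assume kK: "K < k"
    have k3: "real k \<ge> 3" using kK K_def by simp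
    have "real k > 16/a + a" using kK K_def by linarith
    moreover have "16/a > 0" using a0 by simp
    ultimately have k1: "real k > 16/a" and k2: "real k > a" using a0 by linarith+
    have kp: "k > 0" using k3 by simp
    define w where "w = rcis (R powr (1/k)) (Arg u / k)"
    have "w^k = rcis ((R powr (1/k))^k) (real k * (Arg u / k))"
      unfolding w_def by (rule DeMoivre2)
    also have "(R powr (1/k))^k = R" using R1 kp by (simp add: powr_power)
    also have "real k * (Arg u / k) = Arg u" using kp by simp
    finally have wk: "w^k = u" unfolding R_def by (simp add: rcis_cmod_Arg)
    have e: "R powr (1/k) = exp (a/k)" unfolding a_def powr_def using R1 by simp
    have e1: "R powr (1/k) \<ge> 1 + a/k" unfolding e by simp
    have "(Arg u / k)^2 \<le> (4 / k)^2"
    proof -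
      have "\<bar>Arg u\<bar> \<le> 4" using Arg_bounded[of u] pi_less_4 by linarith
      then have "\<bar>Arg u / k\<bar> \<le> 4 / k" using kp by (simp add: divide_right_mono)
      then show ?thesis by (metis abs_ge_zero power2_abs power_mono)
    qed
    then have "cos (Arg u / k) \<ge> 1 - 8/(real k)^2"
      using cos_lb[of "Arg u / k"] by (simp add: power_divide)
    moreover have "1 - 8/(real k)^2 \<ge> 0"
    proof -
      have k9: "(real k)^2 \<ge> 3^2" using power_mono[OF k3, of 2] by simp
      then have "8/(real k)^2 \<le> 1" by (subst divide_le_eq) auto
      then show ?thesis by simp
    qed
    ultimately have "Re w \<ge> (1 + a/k) * (1 - 8/(real k)^2)"
      unfolding w_def Re_rcis using e1 a0
      by (intro mult_mono) auto
    moreover have "(1 + a/k) * (1 - 8/(real k)^2) > 1" by (rule ineq_aux[OF a0 k1 k2 k3])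
    ultimately show "\<exists>w. w^k = u \<and> Re w > 1" using wk by auto
  qed
qed

theorem theorem4:
  fixes l :: rat
  assumes "l > 1"
  shows "\<exists>N::int. \<forall>m::nat. int m > N \<longrightarrow> l * of_nat m \<in> \<int> \<longrightarrow>
           \<not> stable_graph (Kbip_V m (nat \<lfloor>l * of_nat m\<rfloor>)) Kbip_E"
proof -
  obtain a b where qo: "quotient_of l = (a, b)" by (cases "quotient_of l") auto
  have b0: "b > 0" using quotient_of_denom_pos[OF qo] .
  have cop: "coprime a b" using quotient_of_coprime[OF qo] .
  have lab: "l = of_int a / of_int b" using quotient_of_div[OF qo] .
  have ab: "a > b" using assms b0 unfolding lab by (simp add: field_simps)
  define p where "p = nat a"
  define q where "q = nat b"
  have q0: "0 < q" and qp: "q < p" using b0 ab unfolding p_def q_def by auto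
  obtain u :: complex where u: "u^q + u^p = 1" "norm u > 1" using big_root[OF q0 qp] by blast
  obtain K :: nat where K: "\<And>k. k > K \<Longrightarrow> \<exists>w. w^k = u \<and> Re w > 1"
    using kth_root[OF u(2)] by blast
  show ?thesis
  proof (rule exI[of _ "int (q * K)"], intro allI impI)
    fix m :: nat
    assume mN: "int m > int (q * K)" and mi: "l * of_nat m \<in> \<int>"
    obtain t :: int where t: "l * of_nat m = of_int t" using mi by (elim Ints_cases) auto
    have that_eq: "of_int a * of_nat m = (of_int t * of_int b :: rat)"
      using t b0 unfolding lab by (simp add: field_simps)
    have atb: "a * int m = t * b"
    proof -
      have "rat_of_int (a * int m) = rat_of_int (t * b)" using that_eq by simp
      then show ?thesis by (simp only: of_int_eq_iff)
    qed
    have "b dvd a * int m" using atb by simp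
    then have "b dvd int m" using coprime_dvd_mult_right_iff[of b a "int m"] cop by (simp add: coprime_commute)
    then obtain c where c: "int m = b * c" by (elim dvdE)
    have "0 \<le> b * c" unfolding c[symmetric] by simp
    then have c0: "c \<ge> 0" using b0 by (simp add: zero_le_mult_iff)
    have "b * t = a * int m" using atb by (simp add: mult.commute)
    also have "\<dots> = b * (a * c)" unfolding c by (simp add: mult.left_commute)
    finally have "b * t = b * (a * c)" .
    then have tc: "t = a * c" using b0 by auto
    define k where "k = nat c"
    have mk: "m = q * k" unfolding q_def k_def using c c0 b0 by (simp add: nat_mult_distrib[symmetric])
    have nk: "nat \<lfloor>l * of_nat m\<rfloor> = p * k"
    proof -
      have "\<lfloor>l * of_nat m\<rfloor> = a * c" unfolding t tc by (rule floor_of_int)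
      then show ?thesis unfolding p_def k_def using c0 ab b0 by (simp add: nat_mult_distrib)
    qed
    have "k > K" using mN mk q0 by simp
    then obtain w where w: "w^k = u" "Re w > 1" using K by blast
    define z where "z = w - 1"
    have "indep_poly (Kbip_V m (nat \<lfloor>l * of_nat m\<rfloor>)) Kbip_E z = (1+z)^(q*k) + (1+z)^(p*k) - 1"
      by (simp only: kbip_poly nk) (simp only: mk)
    also have "\<dots> = (w^k)^q + (w^k)^p - 1" unfolding z_def by (simp add: power_mult mult.commute)
    also have "\<dots> = 0" using u w by simp
    finally have "indep_poly (Kbip_V m (nat \<lfloor>l * of_nat m\<rfloor>)) Kbip_E z = 0" .
    moreover have "Re z > 0" using w unfolding z_def by simp
    ultimately show "\<not> stable_graph (Kbip_V m (nat \<lfloor>l * of_nat m\<rfloor>)) Kbip_E"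
      unfolding stable_graph_def using not_le by blast
  qed
qed


end
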